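(* Let $V$ be a space. The following are equivalent: (i) $V$ is homothetic to $\langle 1,\tau\rangle_{\mathbb{Q}}$ for some root of unity $\tau$; (ii) $V$ contains a rational triple containing two perpendicular vectors; (iii) $V$ contains a rational $4$-tuple containing two perpendicular vectors.
   Context: A space is a $2$-dimensional $\mathbb{Q}$-vector subspace $V\subset\mathbb{C}$ containing two $\mathbb{R}$-linearly independent vectors; $\langle 1,\tau\rangle_{\mathbb{Q}}=\mathbb{Q}+\mathbb{Q}\tau$. Spaces $V_1,V_2$ are homothetic if $V_2=\lambda V_1$ for some $\lambda\in\mathbb{C}^*$. A rational $n$-tuple in $V$ is a set of $n$ vectors of $V$ spanning $n$ distinct lines through $0$ such that for any two of them $v,w$ the argument of $w/v$ is a rational multiple of $\pi$. *)

theory Defs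
  imports "HOL-Analysis.Analysis"
begin

definition qspan2 :: "complex \<Rightarrow> complex \<Rightarrow> complex set" where
  "qspan2 a b = {of_rat p * a + of_rat q * b | p q. True}"

definition q_indep2 :: "complex \<Rightarrow> complex \<Rightarrow> bool" where
  "q_indep2 a b \<longleftrightarrow> (\<forall>p q :: rat. of_rat p * a + of_rat q * b = 0 \<longrightarrow> p = 0 \<and> q = 0)"

definition r_indep2 :: "complex \<Rightarrow> complex \<Rightarrow> bool" where
  "r_indep2 v w \<longleftrightarrow> (\<forall>r s :: real. of_real r * v + of_real s * w = 0 \<longrightarrow> r = 0 \<and> s = 0)"

definition is_space :: "complex set \<Rightarrow> bool" where
  "is_space V \<longleftrightarrow> (\<exists>a b. q_indep2 a b \<and> V = qspan2 a b) \<and>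
                   (\<exists>v\<in>V. \<exists>w\<in>V. r_indep2 v w)"

definition homothetic :: "complex set \<Rightarrow> complex set \<Rightarrow> bool" where
  "homothetic V1 V2 \<longleftrightarrow> (\<exists>l::complex. l \<noteq> 0 \<and> V2 = (\<lambda>z. l * z) ` V1)"

definition root_of_unity :: "complex \<Rightarrow> bool" where
  "root_of_unity z \<longleftrightarrow> (\<exists>n::nat. n > 0 \<and> z ^ n = 1)"

text \<open>A rational n-tuple in V: n vectors of V spanning n distinct lines through 0,
  such that the argument of w/v is a rational multiple of pi for any two of them.\<close>
definition rational_tuple :: "nat \<Rightarrow> complex set \<Rightarrow> complex set \<Rightarrow> bool" where
  "rational_tuple n V S \<longleftrightarrow> finite S \<and> card S = n \<and> S \<subseteq> V \<and> 0 \<notin> S \<and>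
     (\<forall>v\<in>S. \<forall>w\<in>S. v \<noteq> w \<longrightarrow> w / v \<notin> \<real>) \<and>
     (\<forall>v\<in>S. \<forall>w\<in>S. \<exists>q::rat. Arg (w / v) = of_rat q * pi)"

definition has_perp_pair :: "complex set \<Rightarrow> bool" where
  "has_perp_pair S \<longleftrightarrow> (\<exists>v\<in>S. \<exists>w\<in>S. v \<noteq> w \<and> v \<bullet> w = 0)"

end

theory Submission
  imports Defs
begin


lemma ofreal_ofrat: "complex_of_real (of_rat q) = of_rat q"
  by (cases q) (simp add: of_rat_rat)

lemma span_scale: "qspan2 (l*a) (l*b) = (\<lambda>z. l*z) ` qspan2 a b"
proof
  show "qspan2 (l*a) (l*b) \<subseteq> (\<lambda>z. l*z) ` qspan2 a b"
  proof
    fix x assume "x \<in> qspan2 (l*a) (l*b)"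
    then obtain p q where x: "x = of_rat p * (l*a) + of_rat q * (l*b)" unfolding qspan2_def by blast
    then have "x = l * (of_rat p * a + of_rat q * b)" by (simp add: algebra_simps)
    moreover have "of_rat p * a + of_rat q * b \<in> qspan2 a b" unfolding qspan2_def by blast
    ultimately show "x \<in> (\<lambda>z. l*z) ` qspan2 a b" by blast
  qed
next
  show "(\<lambda>z. l*z) ` qspan2 a b \<subseteq> qspan2 (l*a) (l*b)"
  proof
    fix x assume "x \<in> (\<lambda>z. l*z) ` qspan2 a b"
    then obtain p q where x: "x = l * (of_rat p * a + of_rat q * b)" unfolding qspan2_def by blast
    then have "x = of_rat p * (l*a) + of_rat q * (l*b)" by (simp add: algebra_simps)
    then show "x \<in> qspan2 (l*a) (l*b)" unfolding qspan2_def by blast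
  qed
qed

lemma lc_div: "(d::complex) \<noteq> 0 \<Longrightarrow> (x / d) * u + (y / d) * v = (x * u + y * v) / d"
  by (simp add: add_divide_distrib)

lemma lc_comb: "(P::complex) * (A1 * u + B1 * v) + Q * (A2 * u + B2 * v) = (P * A1 + Q * A2) * u + (P * B1 + Q * B2) * v"
  by (simp add: algebra_simps)

lemma span_change:
  assumes u: "u \<in> qspan2 a b" and v: "v \<in> qspan2 a b" and ind: "r_indep2 u v"
  shows "qspan2 u v = qspan2 a b"
proof -
  obtain p1 q1 where u': "u = of_rat p1 * a + of_rat q1 * b" using u unfolding qspan2_def by blast
  obtain p2 q2 where v': "v = of_rat p2 * a + of_rat q2 * b" using v unfolding qspan2_def by blast
  define D where "D = p1 * q2 - p2 * q1"
  have Dc: "(of_rat D :: complex) = of_rat p1 * of_rat q2 - of_rat p2 * of_rat q1"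
    by (simp add: D_def of_rat_mult of_rat_diff)
  have e1: "of_rat q2 * u + of_rat (-q1) * v = of_rat D * a"
    unfolding u' v' Dc by (simp add: algebra_simps of_rat_minus)
  have e2: "of_rat (-p2) * u + of_rat p1 * v = of_rat D * b"
    unfolding u' v' Dc by (simp add: algebra_simps of_rat_minus)
  have D: "D \<noteq> 0"
  proof
    assume D0: "D = 0"
    have "q2 = 0 \<and> -q1 = 0"
      using ind e1 D0 unfolding r_indep2_def
      by (metis ofreal_ofrat mult_zero_left of_rat_0 of_rat_eq_0_iff)
    moreover have "-p2 = 0 \<and> p1 = 0"
      using ind e2 D0 unfolding r_indep2_def
      by (metis ofreal_ofrat mult_zero_left of_rat_0 of_rat_eq_0_iff)
    ultimately have "u = 0" using u' by simp
    then have "of_real 1 * u + of_real 0 * v = 0" by simp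
    then have "(1::real) = 0" using ind[unfolded r_indep2_def, rule_format, of 1 0] by simp
    then show False by simp
  qed
  have Dn: "(of_rat D :: complex) \<noteq> 0" using D by simp
  have a': "a = of_rat (q2/D) * u + of_rat ((-q1)/D) * v"
  proof -
    have "of_rat (q2/D) * u + of_rat ((-q1)/D) * v = (of_rat q2 * u + of_rat (-q1) * v) / of_rat D"
      unfolding of_rat_divide by (rule lc_div[OF Dn])
    also have "\<dots> = a" using e1 Dn by simp
    finally show ?thesis by simp
  qed
  have b': "b = of_rat ((-p2)/D) * u + of_rat (p1/D) * v"
  proof -
    have "of_rat ((-p2)/D) * u + of_rat (p1/D) * v = (of_rat (-p2) * u + of_rat p1 * v) / of_rat D"
      unfolding of_rat_divide by (rule lc_div[OF Dn])
    also have "\<dots> = b" using e2 Dn by simp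
    finally show ?thesis by simp
  qed
  show ?thesis
  proof
    show "qspan2 u v \<subseteq> qspan2 a b"
    proof
      fix x assume "x \<in> qspan2 u v"
      then obtain p q where x: "x = of_rat p * u + of_rat q * v" unfolding qspan2_def by blast
      have "x = of_rat (p*p1 + q*p2) * a + of_rat (p*q1+q*q2) * b"
        unfolding x u' v' of_rat_add of_rat_mult by (rule lc_comb)
      then show "x \<in> qspan2 a b" unfolding qspan2_def by blast
    qed
  next
    show "qspan2 a b \<subseteq> qspan2 u v"
    proof
      fix x assume "x \<in> qspan2 a b"
      then obtain p q where x: "x = of_rat p * a + of_rat q * b" unfolding qspan2_def by blast
      have "x = of_rat (p*(q2/D) + q*((-p2)/D)) * u + of_rat (p*((-q1)/D)+q*(p1/D)) * v"
        unfolding x of_rat_add of_rat_mult by (subst a', subst b', rule lc_comb)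
      then show "x \<in> qspan2 u v" unfolding qspan2_def by blast
    qed
  qed
qed


lemma arg_rat:
  assumes z: "z \<noteq> 0" and n: "n > 0" and r: "z^n \<in> \<real>" and p: "Re (z^n) > 0"
  shows "\<exists>q::rat. Arg z = of_rat q * pi"
proof -
  have zz: "z = of_real (cmod z) * cis (Arg z)" using rcis_cmod_Arg[of z] by (simp add: rcis_def)
  have "z^n = (of_real (cmod z) * cis (Arg z))^n" using zz by simp
  also have "\<dots> = of_real (cmod z ^ n) * cis (real n * Arg z)"
    by (simp only: power_mult_distrib of_real_power Complex.DeMoivre)
  finally have zn: "z^n = of_real (cmod z ^ n) * cis (real n * Arg z)" .
  have "sin (real n * Arg z) = 0" "cos (real n * Arg z) > 0"
    using r p z unfolding zn by (auto simp: complex_is_Real_iff zero_less_mult_iff)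
  then have "cos (real n * Arg z) = 1"
  proof -
    assume s0: "sin (real n * Arg z) = 0" and c0: "cos (real n * Arg z) > 0"
    have "cos (real n * Arg z) ^ 2 = 1" using sin_cos_squared_add[of "real n * Arg z"] s0 by simp
    then show ?thesis using c0 power2_eq_1_iff by force
  qed
  then obtain k :: int where k: "real n * Arg z = of_int k * 2 * pi" using cos_one_2pi_int by blast
  have "Arg z = of_rat (of_int (2*k) / of_nat n) * pi"
    using k n by (simp add: of_rat_divide of_rat_mult field_simps)
  then show ?thesis by blast
qed


lemma rindep_intro:
  assumes "u \<noteq> 0" "v / u \<notin> \<real>" shows "r_indep2 u v"
  unfolding r_indep2_def
proof (intro allI impI)
  fix r s :: real assume h: "of_real r * u + of_real s * v = 0"
  show "r = 0 \<and> s = 0"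
  proof (cases "s = 0")
    case True then show ?thesis using h assms(1) by auto
  next
    case False
    then have "v = of_real (-r/s) * u" using h
      by (simp add: field_simps) (metis add.commute add_eq_0_iff minus_mult_left mult.commute)
    then have "v / u = of_real (-r/s)" using assms(1) by simp
    then show ?thesis using assms(2) by auto
  qed
qed

lemma ofrat_Reals: "(of_rat q :: complex) \<in> \<real>"
  by (metis ofreal_ofrat Reals_of_real)

lemma cnj_ofrat: "cnj (of_rat q) = of_rat q"
  by (metis ofreal_ofrat complex_cnj_complex_of_real)

lemma dirC:
  assumes sp: "is_space V" and rt: "rational_tuple 3 V S" and pp: "has_perp_pair S"
  shows "\<exists>\<tau>. root_of_unity \<tau> \<and> homothetic (qspan2 1 \<tau>) V"
proof -
  from pp obtain u v where uS: "u \<in> S" and vS: "v \<in> S" and uv: "u \<noteq> v" and perp: "u \<bullet> v = 0"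
    unfolding has_perp_pair_def by blast
  have fin: "finite S" and c3: "card S = 3" and SV: "S \<subseteq> V" and n0: "0 \<notin> S"
    and nr: "\<forall>v\<in>S. \<forall>w\<in>S. v \<noteq> w \<longrightarrow> w / v \<notin> \<real>"
    and ar: "\<forall>v\<in>S. \<forall>w\<in>S. \<exists>q::rat. Arg (w / v) = of_rat q * pi"
    using rt unfolding rational_tuple_def by auto
  have "card (S - {u,v}) = 1" using c3 uS vS uv fin by (simp add: card_Diff_subset)
  then have "S - {u,v} \<noteq> {}" by force
  then obtain w where wS: "w \<in> S" and wu: "w \<noteq> u" and wv: "w \<noteq> v" by blast
  have u0: "u \<noteq> 0" and v0: "v \<noteq> 0" and w0: "w \<noteq> 0" using n0 uS vS wS by auto
  from sp obtain a b where Vab: "V = qspan2 a b" unfolding is_space_def by blast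
  have vu_nr: "v / u \<notin> \<real>" using nr uS vS uv by auto
  have ri: "r_indep2 u v" by (rule rindep_intro[OF u0 vu_nr])
  have Vuv: "V = qspan2 u v" using span_change[of u a b v] uS vS SV Vab ri by auto
  then obtain p q where w_eq: "w = of_rat p * u + of_rat q * v" using wS SV unfolding qspan2_def by blast
  define t where "t = Im (v/u)"
  have "Re (v/u) = 0" using perp by (simp add: Re_divide inner_complex_def mult.commute)
  then have "v / u = \<i> * of_real t" unfolding t_def by (simp add: complex_eq_iff)
  then have v_eq: "v = u * (\<i> * of_real t)" using u0 by (simp add: field_simps)
  have t0: "t \<noteq> 0" using v_eq v0 by auto
  have p0: "p \<noteq> 0"
  proof
    assume "p = 0"
    then have "w / v = of_rat q" using w_eq v0 by simp
    then show False using nr vS wS wv ofrat_Reals by metis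
  qed
  have q0: "q \<noteq> 0"
  proof
    assume "q = 0"
    then have "w / u = of_rat p" using w_eq u0 by simp
    then show False using nr uS wS wu ofrat_Reals by metis
  qed
  have P0: "(of_rat p :: complex) \<noteq> 0" using p0 by simp
  define z where "z = w / u"
  have z_eq: "z = of_rat p + of_rat q * (\<i> * of_real t)"
    using w_eq v_eq u0 by (simp add: z_def field_simps)
  have cz: "cnj z = of_rat p - of_rat q * (\<i> * of_real t)"
    unfolding z_eq by (simp add: cnj_ofrat)
  have z0: "z \<noteq> 0" using w0 u0 by (simp add: z_def)
  obtain Q where Q: "Arg z = of_rat Q * pi" using ar uS wS unfolding z_def by blast
  define A :: real where "A = of_rat (1/2)"
  define B :: real where "B = of_rat (q/(2*p))"
  have B0: "B \<noteq> 0" using p0 q0 unfolding B_def by simp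
  define \<mu> where "\<mu> = of_real A * u + of_real (-B) * v"
  define \<nu> where "\<nu> = of_real A * u + of_real B * v"
  have \<nu>_eq: "\<nu> = u * z / (2 * of_rat p)"
    unfolding \<nu>_def z_eq v_eq A_def B_def using P0
    by (simp add: ofreal_ofrat of_rat_divide of_rat_mult field_simps)
  have \<mu>_eq: "\<mu> = u * cnj z / (2 * of_rat p)"
    unfolding \<mu>_def cz v_eq A_def B_def using P0
    by (simp add: ofreal_ofrat of_rat_divide of_rat_mult field_simps)
  define \<tau> where "\<tau> = cis (2 * Arg z)"
  have zc: "z = of_real (cmod z) * cis (Arg z)" using rcis_cmod_Arg[of z] by (simp add: rcis_def)
  have czc: "cnj z = of_real (cmod z) * cis (- Arg z)"
    by (subst zc) (simp add: cis_cnj)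
  have zr0: "(of_real (cmod z) :: complex) \<noteq> 0" using z0 by simp
  have "z / cnj z = cis (Arg z) / cis (- Arg z)"
    using zr0 by (subst zc, subst czc) simp
  also have "\<dots> = \<tau>" unfolding \<tau>_def cis_divide by simp
  finally have zt: "z / cnj z = \<tau>" .
  have cz0: "cnj z \<noteq> 0" using z0 by simp
  have \<mu>0: "\<mu> \<noteq> 0"
  proof
    assume "\<mu> = 0"
    then have "A = 0" using ri unfolding r_indep2_def \<mu>_def by blast
    then show False unfolding A_def by simp
  qed
  have \<nu>\<mu>: "\<nu> = \<mu> * \<tau>"
  proof -
    have "\<nu> / \<mu> = z / cnj z" unfolding \<nu>_eq \<mu>_eq using u0 P0 cz0 by (simp add: field_simps)
    then show ?thesis using zt \<mu>0 by (simp add: field_simps)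
  qed
  have \<tau>_nr: "\<tau> \<notin> \<real>"
  proof
    assume "\<tau> \<in> \<real>"
    then obtain r where r: "\<tau> = of_real r" by (auto elim: Reals_cases)
    have "of_real (A - r * A) * u + of_real (B + r * B) * v = \<nu> - \<mu> * \<tau>"
      unfolding \<mu>_def \<nu>_def r by (simp add: algebra_simps)
    also have "\<dots> = 0" using \<nu>\<mu> by simp
    finally have "A - r * A = 0 \<and> B + r * B = 0" using ri unfolding r_indep2_def by blast
    then have "r = 1" "B * (1 + r) = 0" unfolding A_def by (auto simp: algebra_simps)
    then show False using B0 by simp
  qed
  have ri2: "r_indep2 \<mu> \<nu>" using rindep_intro[OF \<mu>0] \<nu>\<mu> \<mu>0 \<tau>_nr by simp
  have mem1: "\<mu> \<in> qspan2 u v" unfolding \<mu>_def A_def B_def qspan2_def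
    by (rule CollectI, rule exI[of _ "1/2"], rule exI[of _ "-(q/(2*p))"]) (simp add: ofreal_ofrat of_rat_minus)
  have mem2: "\<nu> \<in> qspan2 u v" unfolding \<nu>_def A_def B_def qspan2_def
    by (rule CollectI, rule exI[of _ "1/2"], rule exI[of _ "q/(2*p)"]) (simp add: ofreal_ofrat)
  have "V = qspan2 \<mu> \<nu>" using span_change[OF mem1 mem2 ri2] Vuv by simp
  also have "\<dots> = qspan2 (\<mu> * 1) (\<mu> * \<tau>)" using \<nu>\<mu> by simp
  also have "\<dots> = (\<lambda>x. \<mu> * x) ` qspan2 1 \<tau>" by (rule span_scale)
  finally have hom: "homothetic (qspan2 1 \<tau>) V" unfolding homothetic_def using \<mu>0 by blast
  obtain m k where Qf: "Q = Fract m k" and k0: "k > 0" by (cases Q) auto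
  have "\<tau> ^ nat k = cis (real (nat k) * (2 * Arg z))" unfolding \<tau>_def by (rule Complex.DeMoivre)
  also have "real (nat k) * (2 * Arg z) = 2 * pi * of_int m"
    using k0 unfolding Q Qf by (simp add: of_rat_rat field_simps)
  also have "cis (2 * pi * of_int m) = 1" by simp
  finally have "\<tau> ^ nat k = 1" .
  then have "root_of_unity \<tau>" unfolding root_of_unity_def using k0 by (intro exI[of _ "nat k"]) simp
  then show ?thesis using hom by blast
qed


lemma dirB:
  assumes rt: "rational_tuple 4 V S" and pp: "has_perp_pair S"
  shows "\<exists>S'. rational_tuple 3 V S' \<and> has_perp_pair S'"
proof -
  from pp obtain u v where uS: "u \<in> S" and vS: "v \<in> S" and uv: "u \<noteq> v" and perp: "u \<bullet> v = 0"
    unfolding has_perp_pair_def by blast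
  have fin: "finite S" and c4: "card S = 4" using rt unfolding rational_tuple_def by auto
  have "card (S - {u,v}) = 2" using c4 uS vS uv fin by (simp add: card_Diff_subset)
  then have "S - {u,v} \<noteq> {}" by force
  then obtain w where wS: "w \<in> S" and wu: "w \<noteq> u" and wv: "w \<noteq> v" by blast
  have sub: "{u,v,w} \<subseteq> S" using uS vS wS by auto
  have "card {u,v,w} = 3" using uv wu wv by auto
  then have "rational_tuple 3 V {u,v,w}" using rt sub unfolding rational_tuple_def
    by (metis (no_types, lifting) finite.emptyI finite.insertI subset_iff)
  moreover have "has_perp_pair {u,v,w}" unfolding has_perp_pair_def using uv perp by blast
  ultimately show ?thesis by blast
qed

lemma inner_cnj: "(x::complex) \<bullet> y = Re (cnj x * y)"
  by (simp add: inner_complex_def)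

lemma notreal_sym: "(x::complex) / y \<notin> \<real> \<Longrightarrow> y / x \<notin> \<real>"
  by (metis Reals_inverse inverse_divide)

lemma posreal_div: "x \<in> \<real> \<Longrightarrow> Re x > 0 \<Longrightarrow> y \<in> \<real> \<Longrightarrow> Re y > 0 \<Longrightarrow> x / y \<in> \<real> \<and> Re (x / y) > 0"
  by (auto elim!: Reals_cases)

lemma sq_pow:
  assumes "x^2 = \<tau> * of_real c" "c \<noteq> 0" "\<tau>^n = 1"
  shows "x^(4*n) \<in> \<real> \<and> Re (x^(4*n)) > 0"
proof -
  have "x^(4*n) = (x^2)^(2*n)" by (simp add: power_mult[symmetric])
  also have "\<dots> = (\<tau>^n)^2 * of_real ((c^2)^n)" unfolding assms(1)
    by (simp add: power_mult_distrib power_mult[symmetric] mult.commute)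
  also have "\<dots> = of_real ((c^2)^n)" using assms(3) by simp
  finally show ?thesis using assms(2) by simp
qed

lemma dirA:
  assumes sp: "is_space V" and rt: "root_of_unity \<tau>" and hom: "homothetic (qspan2 1 \<tau>) V"
  shows "\<exists>S. rational_tuple 4 V S \<and> has_perp_pair S"
proof -
  obtain l where l0: "l \<noteq> 0" and Vl: "V = (\<lambda>z. l * z) ` qspan2 1 \<tau>"
    using hom unfolding homothetic_def by blast
  obtain n where n0: "n > 0" and tn: "\<tau>^n = 1" using rt unfolding root_of_unity_def by blast
  have "cmod \<tau> ^ n = 1 ^ n" using tn by (metis norm_power norm_one power_one)
  then have nt: "cmod \<tau> = 1" using power_eq_imp_eq_base[OF _ norm_ge_zero zero_le_one n0] by blast
  have tc: "\<tau> * cnj \<tau> = 1" using complex_norm_square[of \<tau>] nt by simp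
  have t0: "\<tau> \<noteq> 0" using nt by auto
  have tnr: "\<tau> \<notin> \<real>"
  proof
    assume "\<tau> \<in> \<real>"
    then obtain r where r: "\<tau> = of_real r" by (auto elim: Reals_cases)
    from sp obtain x y where xV: "x \<in> V" and yV: "y \<in> V" and ri: "r_indep2 x y"
      unfolding is_space_def by blast
    obtain p1 q1 where x: "x = l * (of_rat p1 * 1 + of_rat q1 * \<tau>)" using xV Vl unfolding qspan2_def by blast
    obtain p2 q2 where y: "y = l * (of_rat p2 * 1 + of_rat q2 * \<tau>)" using yV Vl unfolding qspan2_def by blast
    define \<alpha> :: real where "\<alpha> = of_rat p1 + of_rat q1 * r"
    define \<beta> :: real where "\<beta> = of_rat p2 + of_rat q2 * r"
    have x': "x = l * of_real \<alpha>" unfolding x \<alpha>_def r by (simp add: ofreal_ofrat)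
    have y': "y = l * of_real \<beta>" unfolding y \<beta>_def r by (simp add: ofreal_ofrat)
    have "of_real \<beta> * x + of_real (- \<alpha>) * y = 0" unfolding x' y' by (simp add: algebra_simps)
    then have "\<beta> = 0 \<and> - \<alpha> = 0" using ri unfolding r_indep2_def by blast
    then have "of_real 1 * x + of_real 0 * y = 0" unfolding x' by simp
    then have "(1::real) = 0" using ri[unfolded r_indep2_def, rule_format, of 1 0] by simp
    then show False by simp
  qed
  have ntr1: "1 + \<tau> \<notin> \<real>"
  proof
    assume "1 + \<tau> \<in> \<real>"
    then have "(1 + \<tau>) - 1 \<in> \<real>" using Reals_diff[OF _ Reals_1] by blast
    then show False using tnr by simp
  qed
  have ntr2: "1 - \<tau> \<notin> \<real>"
  proof
    assume "1 - \<tau> \<in> \<real>"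
    then have "1 - (1 - \<tau>) \<in> \<real>" using Reals_diff[OF Reals_1] by blast
    then show False using tnr by simp
  qed
  note ntr = ntr1 ntr2
  have p0: "1 + \<tau> \<noteq> 0" "1 - \<tau> \<noteq> 0" using ntr by auto
  have r1: "(1 + \<tau>) / \<tau> \<notin> \<real>"
  proof
    assume "(1 + \<tau>) / \<tau> \<in> \<real>"
    then have "(1 + \<tau>) / \<tau> - 1 \<in> \<real>" by auto
    moreover have "(1 + \<tau>) / \<tau> - 1 = inverse \<tau>" using t0 by (simp add: field_simps)
    ultimately show False using tnr by (metis Reals_inverse inverse_inverse_eq)
  qed
  have r2: "(1 - \<tau>) / \<tau> \<notin> \<real>"
  proof
    assume "(1 - \<tau>) / \<tau> \<in> \<real>"
    then have "(1 - \<tau>) / \<tau> + 1 \<in> \<real>" by auto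
    moreover have "(1 - \<tau>) / \<tau> + 1 = inverse \<tau>" using t0 by (simp add: field_simps)
    ultimately show False using tnr by (metis Reals_inverse inverse_inverse_eq)
  qed
  have r3: "(1 - \<tau>) / (1 + \<tau>) \<notin> \<real>"
  proof
    assume "(1 - \<tau>) / (1 + \<tau>) \<in> \<real>"
    then obtain r where r: "(1 - \<tau>) / (1 + \<tau>) = of_real r" by (auto elim: Reals_cases)
    then have e: "1 - \<tau> = of_real r * (1 + \<tau>)" using p0 by (simp add: field_simps)
    show False
    proof (cases "r = -1")
      case True then show False using e by simp
    next
      case False
      then have "(1 + of_real r) \<noteq> (0::complex)"
        by (metis add.commute add_eq_0_iff of_real_1 of_real_eq_iff of_real_minus)
      moreover have "\<tau> * (1 + of_real r) = 1 - of_real r" using e by (simp add: algebra_simps)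
      ultimately have "\<tau> = (1 - of_real r) / (1 + of_real r)" by (simp add: field_simps)
      then have "\<tau> \<in> \<real>" by simp
      then show False using tnr by simp
    qed
  qed
  define T where "T = {1, \<tau>, 1 + \<tau>, 1 - \<tau>}"
  have Tnr: "\<forall>a\<in>T. \<forall>b\<in>T. a \<noteq> b \<longrightarrow> b / a \<notin> \<real>"
    unfolding T_def using tnr ntr r1 r2 r3 notreal_sym[OF r1] notreal_sym[OF r2] notreal_sym[OF r3]
      notreal_sym[of \<tau> 1] notreal_sym[of "1+\<tau>" 1] notreal_sym[of "1-\<tau>" 1]
    by auto
  have T0: "0 \<notin> T" unfolding T_def using t0 p0 by auto
  have Tpow: "\<forall>a\<in>T. a^(4*n) \<in> \<real> \<and> Re (a^(4*n)) > 0"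
  proof
    fix a assume "a \<in> T"
    then consider "a = 1" | "a = \<tau>" | "a = 1 + \<tau>" | "a = 1 - \<tau>" unfolding T_def by blast
    then show "a^(4*n) \<in> \<real> \<and> Re (a^(4*n)) > 0"
    proof cases
      case 1 then show ?thesis by simp
    next
      case 2
      have "\<tau>^(4*n) = (\<tau>^n)^4" by (simp add: power_mult[symmetric] mult.commute)
      then show ?thesis using 2 tn by simp
    next
      case 3
      have "(1 + \<tau>)^2 = \<tau> * of_real (2 + 2 * Re \<tau>)"
        using tc by (simp add: power2_eq_square complex_add algebra_simps) (simp add: complex_eq_iff)
      moreover have "2 + 2 * Re \<tau> \<noteq> 0"
      proof
        assume h: "2 + 2 * Re \<tau> = 0"
        have "(Re \<tau>)^2 + (Im \<tau>)^2 = 1" using nt by (simp add: cmod_def)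
        moreover have "Re \<tau> = -1" using h by simp
        ultimately have "Im \<tau> * Im \<tau> = 0" by (simp add: power2_eq_square)
        then have "Im \<tau> = 0" by simp
        then show False using tnr by (simp add: complex_is_Real_iff)
      qed
      ultimately show ?thesis using sq_pow tn 3 by blast
    next
      case 4
      have "(1 - \<tau>)^2 = \<tau> * of_real (2 * Re \<tau> - 2)"
        using tc by (simp add: power2_eq_square algebra_simps) (simp add: complex_eq_iff)
      moreover have "2 * Re \<tau> - 2 \<noteq> 0"
      proof
        assume h: "2 * Re \<tau> - 2 = 0"
        have "(Re \<tau>)^2 + (Im \<tau>)^2 = 1" using nt by (simp add: cmod_def)
        moreover have "Re \<tau> = 1" using h by simp
        ultimately have "Im \<tau> * Im \<tau> = 0" by (simp add: power2_eq_square)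
        then have "Im \<tau> = 0" by simp
        then show False using tnr by (simp add: complex_is_Real_iff)
      qed
      ultimately show ?thesis using sq_pow tn 4 by blast
    qed
  qed
  define S where "S = (\<lambda>x. l * x) ` T"
  have inj: "inj_on (\<lambda>x. l * x) T" using l0 by (auto intro: inj_onI)
  have d5: "\<tau> \<noteq> 1 - \<tau>"
  proof
    assume "\<tau> = 1 - \<tau>"
    then have h: "\<tau> = 1/2" by (simp add: field_simps)
    have "(1/2::complex) \<in> \<real>" by (rule Reals_divide[OF Reals_1 Reals_numeral])
    then show False using tnr[unfolded h] by blast
  qed
  have d1: "1 \<noteq> \<tau>" using tnr by auto
  have cT: "card T = 4" unfolding T_def using d1 d5 t0 by simp
  have "rational_tuple 4 V S"
    unfolding rational_tuple_def
  proof (intro conjI)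
    show "finite S" unfolding S_def T_def by simp
    show "card S = 4" unfolding S_def using card_image[OF inj] cT by simp
    show "S \<subseteq> V" unfolding S_def Vl T_def qspan2_def
    proof (intro image_mono subsetI)
      fix x assume "x \<in> {1, \<tau>, 1 + \<tau>, 1 - \<tau>}"
      then show "x \<in> {of_rat p * 1 + of_rat q * \<tau> |p q. True}"
        apply (elim insertE)
        apply (rule CollectI, rule exI[of _ 1], rule exI[of _ 0], simp)
        apply (rule CollectI, rule exI[of _ 0], rule exI[of _ 1], simp)
        apply (rule CollectI, rule exI[of _ 1], rule exI[of _ 1], simp)
        apply (rule CollectI, rule exI[of _ 1], rule exI[of _ "-1"], simp)
        by simp
    qed
    show "0 \<notin> S" unfolding S_def using T0 l0 by auto
    show "\<forall>v\<in>S. \<forall>w\<in>S. v \<noteq> w \<longrightarrow> w / v \<notin> \<real>"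
      unfolding S_def using Tnr l0 by auto
    show "\<forall>v\<in>S. \<forall>w\<in>S. \<exists>q::rat. Arg (w / v) = of_rat q * pi"
    proof (intro ballI)
      fix v w assume "v \<in> S" "w \<in> S"
      then obtain a b where a: "a \<in> T" "v = l * a" and b: "b \<in> T" "w = l * b" unfolding S_def by blast
      have wv: "w / v = b / a" using l0 a b by simp
      have a0: "a \<noteq> 0" "b \<noteq> 0" using T0 a b by auto
      have "(b / a)^(4*n) = b^(4*n) / a^(4*n)" by (simp add: power_divide)
      then have "(b / a)^(4*n) \<in> \<real> \<and> Re ((b / a)^(4*n)) > 0"
        using posreal_div Tpow a(1) b(1) by simp
      then show "\<exists>q::rat. Arg (w / v) = of_rat q * pi" unfolding wv
        using arg_rat[of "b/a" "4*n"] a0 n0 by simp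
    qed
  qed
  moreover have "has_perp_pair S"
  proof -
    have in1: "l * (1 + \<tau>) \<in> S" "l * (1 - \<tau>) \<in> S" unfolding S_def T_def by auto
    have ne: "l * (1 + \<tau>) \<noteq> l * (1 - \<tau>)" using l0 t0 by simp
    have "(l * (1 + \<tau>)) \<bullet> (l * (1 - \<tau>)) = Re (cnj (l * (1 + \<tau>)) * (l * (1 - \<tau>)))"
      by (rule inner_cnj)
    also have "cnj (l * (1 + \<tau>)) * (l * (1 - \<tau>)) = (cnj l * l) * (cnj \<tau> - \<tau> * cnj \<tau> + 1 - \<tau>)"
      by (simp add: algebra_simps)
    also have "\<dots> = of_real ((cmod l)^2) * (cnj \<tau> - \<tau>)"
    proof -
      have ll: "cnj l * l = of_real ((cmod l)^2)" using complex_norm_square[of l] by (simp add: mult.commute)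
      show ?thesis unfolding ll tc by simp
    qed
    also have "Re \<dots> = 0" by simp
    finally show ?thesis unfolding has_perp_pair_def using in1 ne by blast
  qed
  ultimately show ?thesis by blast
qed

theorem lemma7p1:
  assumes "is_space V"
  shows "((\<exists>\<tau>. root_of_unity \<tau> \<and> homothetic (qspan2 1 \<tau>) V)
          \<longleftrightarrow> (\<exists>S. rational_tuple 3 V S \<and> has_perp_pair S))
       \<and> ((\<exists>S. rational_tuple 3 V S \<and> has_perp_pair S)
          \<longleftrightarrow> (\<exists>S. rational_tuple 4 V S \<and> has_perp_pair S))"
proof -
  have A: "\<And>\<tau>. root_of_unity \<tau> \<Longrightarrow> homothetic (qspan2 1 \<tau>) V \<Longrightarrow> \<exists>S. rational_tuple 4 V S \<and> has_perp_pair S"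
    using dirA[OF assms] by blast
  have B: "\<And>S. rational_tuple 4 V S \<Longrightarrow> has_perp_pair S \<Longrightarrow> \<exists>S'. rational_tuple 3 V S' \<and> has_perp_pair S'"
    using dirB by blast
  have C: "\<And>S. rational_tuple 3 V S \<Longrightarrow> has_perp_pair S \<Longrightarrow> \<exists>\<tau>. root_of_unity \<tau> \<and> homothetic (qspan2 1 \<tau>) V"
    using dirC[OF assms] by blast
  show ?thesis using A B C by blast
qed

end
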